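(* For every decorated tree $\mathcal{T}$, the integer $M(\mathcal{T}) + F(\mathcal{T})$ is even.
   Context: A graph is a pair $(X_0,X_1)$ of finite sets such that each element of $X_1$ (an edge) is a $2$-element subset of $X_0$; elements of $X_0$ are called cells. The valency $\delta_x$ of a cell $x$ is the number of edges containing $x$. A path is a tuple $(x_0,\dots,x_n)$ ($n\ge 0$) of cells such that $\{x_i,x_{i+1}\}$ is an edge for each $i<n$ and these $n$ edges are pairwise distinct; a cell (resp. edge) is in the path if it is one of the $x_i$ (resp. one of the $\{x_i,x_{i+1}\}$). The graph is a tree if for any cells $x,y$ there is a unique path from $x$ to $y$, denoted $\gamma_{x,y}$. A decorated tree is a $5$-tuple $\mathcal{T}=(V,A,E,f,q)$ where $V$ (vertices) and $A$ (arrows) are finite disjoint sets, $(V\cup A,E)$ is a tree, every arrow has valency $1$, $f:A\to\mathbb{Z}$ is a map, $q$ assigns an integer $q(e,x)$ (the decoration of $e$ near $x$) to each pair $(e,x)$ with $e\in E$, $x\in e$, such that $q(e,\alpha)=1$ whenever $\alpha\in A$, and for every $v\in V$ and distinct edges $e,e'$ containing $v$, $\gcd(q(e,v),q(e',v))=1$. Let $A_0=\{\alpha\in A: f(\alpha)=0\}$. For $x\in V\cup A$ and an edge $e\ni x$, $Q(e,x)=\prod q(e',x)$ over edges $e'\neq e$ containing $x$ (empty products equal $1$). An edge $\varepsilon$ is incident to a path $\gamma$ if $\varepsilon$ is not in $\gamma$ but contains some cell $u$ of $\gamma$; then $q(\varepsilon,\gamma):=q(\varepsilon,u)$. For $v\in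 V\cup A$ and $\alpha\in A$ with $v\ne\alpha$, $x_{v,\alpha}=f(\alpha)\prod_\varepsilon q(\varepsilon,\gamma_{v,\alpha})$ over all edges $\varepsilon$ incident to $\gamma_{v,\alpha}$, and $\hat x_{v,\alpha}$ is the same expression with the product restricted to those $\varepsilon$ not containing $v$. For $v\in V\cup A_0$, $N_v=\sum_{\alpha\in A\setminus A_0} x_{v,\alpha}$, and $M(\mathcal{T})=-\sum_{v\in V\cup A_0}N_v(\delta_v-2)$. For $u\in V\cup A$ and an edge $e\ni u$, $p(u,e)=\sum \hat x_{u,\alpha}$ over $\alpha\in A\setminus A_0$ such that $e$ is in $\gamma_{u,\alpha}$. For $\alpha\in A\setminus A_0$ with unique incident edge $e_\alpha$, $F(\alpha)=\gcd(f(\alpha),p(\alpha,e_\alpha))\ge 0$, and $F(\mathcal{T})=\sum_{\alpha\in A\setminus A_0}F(\alpha)$. *)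

theory Defs
  imports Main
begin

definition is_graph :: "'a set \<Rightarrow> 'a set set \<Rightarrow> bool" where
  "is_graph X0 X1 \<longleftrightarrow> finite X0 \<and> finite X1 \<and> (\<forall>e\<in>X1. e \<subseteq> X0 \<and> card e = 2)"

definition valency :: "'a set set \<Rightarrow> 'a \<Rightarrow> nat" where
  "valency X1 x = card {e \<in> X1. x \<in> e}"

definition path_edge_list :: "'a list \<Rightarrow> 'a set list" where
  "path_edge_list xs = map (\<lambda>i. {xs ! i, xs ! Suc i}) [0..<length xs - 1]"

definition path_edges :: "'a list \<Rightarrow> 'a set set" where
  "path_edges xs = set (path_edge_list xs)"

definition is_path :: "'a set \<Rightarrow> 'a set set \<Rightarrow> 'a list \<Rightarrow> bool" where
  "is_path X0 X1 xs \<longleftrightarrow> xs \<noteq> [] \<and> set xs \<subseteq> X0 \<and> path_edges xs \<subseteq> X1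
     \<and> distinct (path_edge_list xs)"

definition is_tree :: "'a set \<Rightarrow> 'a set set \<Rightarrow> bool" where
  "is_tree X0 X1 \<longleftrightarrow> is_graph X0 X1 \<and>
     (\<forall>x\<in>X0. \<forall>y\<in>X0. \<exists>!xs. is_path X0 X1 xs \<and> hd xs = x \<and> last xs = y)"

definition tpath :: "'a set \<Rightarrow> 'a set set \<Rightarrow> 'a \<Rightarrow> 'a \<Rightarrow> 'a list" where
  "tpath X0 X1 x y = (THE xs. is_path X0 X1 xs \<and> hd xs = x \<and> last xs = y)"

definition decorated_tree ::
  "'a set \<Rightarrow> 'a set \<Rightarrow> 'a set set \<Rightarrow> ('a \<Rightarrow> int) \<Rightarrow> ('a set \<Rightarrow> 'a \<Rightarrow> int) \<Rightarrow> bool" where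
  "decorated_tree V A E f q \<longleftrightarrow>
     finite V \<and> finite A \<and> V \<inter> A = {} \<and> is_tree (V \<union> A) E \<and>
     (\<forall>\<alpha>\<in>A. valency E \<alpha> = 1) \<and>
     (\<forall>e\<in>E. \<forall>\<alpha>\<in>A. \<alpha> \<in> e \<longrightarrow> q e \<alpha> = 1) \<and>
     (\<forall>v\<in>V. \<forall>e\<in>E. \<forall>e'\<in>E. v \<in> e \<and> v \<in> e' \<and> e \<noteq> e' \<longrightarrow> gcd (q e v) (q e' v) = 1)"

definition A0 :: "'a set \<Rightarrow> ('a \<Rightarrow> int) \<Rightarrow> 'a set" where
  "A0 A f = {\<alpha> \<in> A. f \<alpha> = 0}"

definition incident_edges :: "'a set set \<Rightarrow> 'a list \<Rightarrow> 'a set set" where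
  "incident_edges E \<gamma> = {\<epsilon> \<in> E. \<epsilon> \<notin> path_edges \<gamma> \<and> (\<exists>u\<in>set \<gamma>. u \<in> \<epsilon>)}"

text \<open>q(\<epsilon>,\<gamma>) := q(\<epsilon>,u) for the cell u of \<gamma> in \<epsilon> (unique in a tree).\<close>
definition q_path :: "('a set \<Rightarrow> 'a \<Rightarrow> int) \<Rightarrow> 'a set \<Rightarrow> 'a list \<Rightarrow> int" where
  "q_path q \<epsilon> \<gamma> = q \<epsilon> (THE u. u \<in> set \<gamma> \<and> u \<in> \<epsilon>)"

definition xval :: "'a set \<Rightarrow> 'a set \<Rightarrow> 'a set set \<Rightarrow> ('a \<Rightarrow> int) \<Rightarrow> ('a set \<Rightarrow> 'a \<Rightarrow> int)
    \<Rightarrow> 'a \<Rightarrow> 'a \<Rightarrow> int" where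
  "xval V A E f q v \<alpha> = (let \<gamma> = tpath (V \<union> A) E v \<alpha> in
     f \<alpha> * (\<Prod>\<epsilon>\<in>incident_edges E \<gamma>. q_path q \<epsilon> \<gamma>))"

definition xhat :: "'a set \<Rightarrow> 'a set \<Rightarrow> 'a set set \<Rightarrow> ('a \<Rightarrow> int) \<Rightarrow> ('a set \<Rightarrow> 'a \<Rightarrow> int)
    \<Rightarrow> 'a \<Rightarrow> 'a \<Rightarrow> int" where
  "xhat V A E f q v \<alpha> = (let \<gamma> = tpath (V \<union> A) E v \<alpha> in
     f \<alpha> * (\<Prod>\<epsilon>\<in>{\<epsilon> \<in> incident_edges E \<gamma>. v \<notin> \<epsilon>}. q_path q \<epsilon> \<gamma>))"

definition Nval :: "'a set \<Rightarrow> 'a set \<Rightarrow> 'a set set \<Rightarrow> ('a \<Rightarrow> int) \<Rightarrow> ('a set \<Rightarrow> 'a \<Rightarrow> int)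
    \<Rightarrow> 'a \<Rightarrow> int" where
  "Nval V A E f q v = (\<Sum>\<alpha>\<in>A - A0 A f. xval V A E f q v \<alpha>)"

definition Mval :: "'a set \<Rightarrow> 'a set \<Rightarrow> 'a set set \<Rightarrow> ('a \<Rightarrow> int) \<Rightarrow> ('a set \<Rightarrow> 'a \<Rightarrow> int) \<Rightarrow> int" where
  "Mval V A E f q = - (\<Sum>v\<in>V \<union> A0 A f. Nval V A E f q v * (int (valency E v) - 2))"

definition pval :: "'a set \<Rightarrow> 'a set \<Rightarrow> 'a set set \<Rightarrow> ('a \<Rightarrow> int) \<Rightarrow> ('a set \<Rightarrow> 'a \<Rightarrow> int)
    \<Rightarrow> 'a \<Rightarrow> 'a set \<Rightarrow> int" where
  "pval V A E f q u e = (\<Sum>\<alpha>\<in>{\<alpha> \<in> A - A0 A f. e \<in> path_edges (tpath (V \<union> A) E u \<alpha>)}.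
       xhat V A E f q u \<alpha>)"

definition arrow_edge :: "'a set set \<Rightarrow> 'a \<Rightarrow> 'a set" where
  "arrow_edge E \<alpha> = (THE e. e \<in> E \<and> \<alpha> \<in> e)"

definition Farrow :: "'a set \<Rightarrow> 'a set \<Rightarrow> 'a set set \<Rightarrow> ('a \<Rightarrow> int) \<Rightarrow> ('a set \<Rightarrow> 'a \<Rightarrow> int)
    \<Rightarrow> 'a \<Rightarrow> int" where
  "Farrow V A E f q \<alpha> = gcd (f \<alpha>) (pval V A E f q \<alpha> (arrow_edge E \<alpha>))"

definition Fval :: "'a set \<Rightarrow> 'a set \<Rightarrow> 'a set set \<Rightarrow> ('a \<Rightarrow> int) \<Rightarrow> ('a set \<Rightarrow> 'a \<Rightarrow> int) \<Rightarrow> int" where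
  "Fval V A E f q = (\<Sum>\<alpha>\<in>A - A0 A f. Farrow V A E f q \<alpha>)"

end

theory Submission
  imports Defs
begin

lemma pel_Cons2: "path_edge_list (x # y # ys) = {x,y} # path_edge_list (y # ys)"
  unfolding path_edge_list_def
  by (simp add: upt_conv_Cons map_Suc_upt[symmetric] del: upt_Suc)

lemma pel_single[simp]: "path_edge_list [x] = []"
  unfolding path_edge_list_def by simp

lemma pel_drop: "path_edge_list (drop i xs) = drop i (path_edge_list xs)"
  unfolding path_edge_list_def
  by (rule nth_equalityI) (auto simp: add.commute)

lemma pel_rev: "path_edge_list (rev xs) = rev (path_edge_list xs)"
  unfolding path_edge_list_def
  by (rule nth_equalityI) (auto simp: rev_nth insert_commute Suc_diff_Suc)

lemma pe_iff: "e \<in> path_edges xs \<longleftrightarrow> (\<exists>i. Suc i < length xs \<and> e = {xs ! i, xs ! Suc i})"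
  unfolding path_edges_def path_edge_list_def
proof
  assume "e \<in> set (map (\<lambda>i. {xs ! i, xs ! Suc i}) [0..<length xs - 1])"
  then obtain i where "i < length xs - 1" "e = {xs ! i, xs ! Suc i}" by auto
  then show "\<exists>i. Suc i < length xs \<and> e = {xs ! i, xs ! Suc i}" by (intro exI[of _ i]) auto
next
  assume "\<exists>i. Suc i < length xs \<and> e = {xs ! i, xs ! Suc i}"
  then obtain i where "Suc i < length xs" "e = {xs ! i, xs ! Suc i}" by auto
  then show "e \<in> set (map (\<lambda>i. {xs ! i, xs ! Suc i}) [0..<length xs - 1])" by auto
qed

lemma pe_Cons2: "path_edges (x # y # ys) = insert {x,y} (path_edges (y # ys))"
  unfolding path_edges_def by (simp add: pel_Cons2)

lemma pe_sub_set: "e \<in> path_edges xs \<Longrightarrow> u \<in> e \<Longrightarrow> u \<in> set xs"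
  unfolding pe_iff by auto

definition Wt :: "'a set \<Rightarrow> 'a set set \<Rightarrow> ('a set \<Rightarrow> 'a \<Rightarrow> int) \<Rightarrow> 'a \<Rightarrow> 'a \<Rightarrow> int" where
  "Wt C E q v a = (\<Prod>\<epsilon>\<in>incident_edges E (tpath C E v a). q_path q \<epsilon> (tpath C E v a))"

lemma offdiag_even:
  fixes h :: "'b \<Rightarrow> 'b \<Rightarrow> int"
  assumes "finite N" "\<forall>a\<in>N. \<forall>b\<in>N. h a b = h b a"
  shows "even (\<Sum>a\<in>N. \<Sum>b\<in>N-{a}. h a b)"
  using assms
proof (induction N rule: finite_induct)
  case empty
  then show ?case by simp
next
  case (insert x N)
  have s1: "(\<Sum>a\<in>insert x N. \<Sum>b\<in>insert x N-{a}. h a b)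
      = (\<Sum>b\<in>insert x N-{x}. h x b) + (\<Sum>a\<in>N. \<Sum>b\<in>insert x N-{a}. h a b)"
    using insert(1,2) by (simp add: sum.insert)
  have s2: "insert x N - {x} = N" using insert(2) by auto
  have s3: "(\<Sum>b\<in>insert x N-{a}. h a b) = h a x + (\<Sum>b\<in>N-{a}. h a b)" if "a \<in> N" for a
  proof -
    have "insert x N - {a} = insert x (N - {a})" using that insert(2) by auto
    then show ?thesis using insert(1,2) by simp
  qed
  have s4: "(\<Sum>a\<in>N. h a x) = (\<Sum>b\<in>N. h x b)"
  proof (rule sum.cong)
    fix a assume "a \<in> N"
    then show "h a x = h x a" using insert(4) by (meson insertI1 insertI2)
  qed simp
  have "(\<Sum>a\<in>insert x N. \<Sum>b\<in>insert x N-{a}. h a b)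
      = 2 * (\<Sum>b\<in>N. h x b) + (\<Sum>a\<in>N. \<Sum>b\<in>N-{a}. h a b)"
    unfolding s1 s2 using s3 s4 by (simp add: sum.distrib)
  moreover have "even (\<Sum>a\<in>N. \<Sum>b\<in>N-{a}. h a b)"
  proof (rule insert(3))
    show "\<forall>a\<in>N. \<forall>b\<in>N. h a b = h b a" using insert(4) by (meson insertI2)
  qed
  ultimately show ?case by simp
qed

locale tree_ctx =
  fixes C :: "'a set" and E :: "'a set set"
  assumes tree: "is_tree C E"
begin

abbreviation tp where "tp x y \<equiv> tpath C E x y"

lemma graph: "is_graph C E" using tree unfolding is_tree_def by auto
lemma finE: "finite E" using graph unfolding is_graph_def by auto
lemma finC: "finite C" using graph unfolding is_graph_def by auto
lemma edge2: "e \<in> E \<Longrightarrow> card e = 2" using graph unfolding is_graph_def by auto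
lemma edgeC: "e \<in> E \<Longrightarrow> e \<subseteq> C" using graph unfolding is_graph_def by auto

lemma edge_pair: assumes "e \<in> E" "u \<in> e" obtains w where "e = {u,w}" "u \<noteq> w" "w \<in> C"
proof -
  from edge2[OF assms(1)] obtain a b where "e = {a,b}" "a \<noteq> b" by (meson card_2_iff)
  then show ?thesis using that assms edgeC[OF assms(1)] by auto
qed

lemma tp_prop: assumes "x \<in> C" "y \<in> C"
  shows "is_path C E (tp x y) \<and> hd (tp x y) = x \<and> last (tp x y) = y"
proof -
  have "\<exists>!xs. is_path C E xs \<and> hd xs = x \<and> last xs = y" using tree assms unfolding is_tree_def by auto
  then show ?thesis unfolding tpath_def by (rule theI')
qed

lemma tp_unique: assumes "is_path C E xs" shows "tp (hd xs) (last xs) = xs"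
proof -
  have ne: "xs \<noteq> []" and s: "set xs \<subseteq> C" using assms unfolding is_path_def by auto
  have "hd xs \<in> C" "last xs \<in> C" using ne s by auto
  then have "\<exists>!ys. is_path C E ys \<and> hd ys = hd xs \<and> last ys = last xs" using tree unfolding is_tree_def by auto
  then show ?thesis unfolding tpath_def using assms by (simp add: the1_equality)
qed

lemma path_drop: assumes "is_path C E xs" "i < length xs" shows "is_path C E (drop i xs)"
  using assms unfolding is_path_def path_edges_def
  by (auto simp: pel_drop dest: in_set_dropD intro: distinct_drop)

lemma path_rev: assumes "is_path C E xs" shows "is_path C E (rev xs)"
  using assms unfolding is_path_def path_edges_def by (auto simp: pel_rev)

lemma tp_ne: "x \<in> C \<Longrightarrow> y \<in> C \<Longrightarrow> tp x y \<noteq> []"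
  using tp_prop unfolding is_path_def by auto

lemma tp_set: "x \<in> C \<Longrightarrow> y \<in> C \<Longrightarrow> set (tp x y) \<subseteq> C"
  using tp_prop unfolding is_path_def by auto

lemma tp_pe: "x \<in> C \<Longrightarrow> y \<in> C \<Longrightarrow> path_edges (tp x y) \<subseteq> E"
  using tp_prop unfolding is_path_def by auto

lemma tp_drop: assumes "x \<in> C" "y \<in> C" "i < length (tp x y)"
  shows "tp (tp x y ! i) y = drop i (tp x y)"
proof -
  have p: "is_path C E (drop i (tp x y))" using path_drop tp_prop assms by blast
  have "hd (drop i (tp x y)) = tp x y ! i" using assms by (simp add: hd_drop_conv_nth)
  moreover have "last (drop i (tp x y)) = y" using assms tp_prop[OF assms(1,2)] by simp
  ultimately show ?thesis using tp_unique[OF p] by simp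
qed

lemma tp_rev: assumes "x \<in> C" "y \<in> C" shows "tp y x = rev (tp x y)"
proof -
  have p: "is_path C E (rev (tp x y))" using path_rev tp_prop assms by blast
  show ?thesis using tp_unique[OF p] tp_prop[OF assms] tp_ne[OF assms]
    by (simp add: hd_rev last_rev)
qed

lemma tp_self: assumes "x \<in> C" shows "tp x x = [x]"
proof -
  have "is_path C E [x]" using assms unfolding is_path_def path_edges_def by auto
  from tp_unique[OF this] show ?thesis by simp
qed

lemma tp_hd_only: assumes "x \<in> C" "y \<in> C" "0 < k" "k < length (tp x y)"
  shows "tp x y ! k \<noteq> x"
proof
  assume "tp x y ! k = x"
  then have "tp x y = drop k (tp x y)" using tp_drop[OF assms(1,2,4)] by simp
  then have "length (tp x y) = length (tp x y) - k" by (metis length_drop)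
  then show False using assms by simp
qed

lemma tp_Cons: assumes "x \<in> C" "y \<in> C" shows "tp x y = x # tl (tp x y)"
  using tp_prop[OF assms] tp_ne[OF assms] by (cases "tp x y") auto

lemma tp_notin_tl: assumes "x \<in> C" "y \<in> C" shows "x \<notin> set (tl (tp x y))"
proof
  assume "x \<in> set (tl (tp x y))"
  then obtain j where j: "j < length (tl (tp x y))" "tl (tp x y) ! j = x" by (auto simp: in_set_conv_nth)
  have "tp x y ! Suc j = x" using j tp_Cons[OF assms] by (metis nth_Cons_Suc)
  moreover have "Suc j < length (tp x y)" using j tp_Cons[OF assms] by (metis length_Cons not_less_eq)
  ultimately show False using tp_hd_only[OF assms, of "Suc j"] by simp
qed

lemma pe_nth: "Suc k < length xs \<Longrightarrow> {xs ! k, xs ! Suc k} \<in> path_edges xs"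
  unfolding pe_iff by auto

lemma tp_ext: assumes ab: "{a,b} \<in> E" "a \<noteq> b" and r: "r \<in> C"
  shows "tp b r = b # tp a r \<or> tp a r = a # tp b r"
proof -
  have aC: "a \<in> C" and bC: "b \<in> C" using edgeC[OF ab(1)] by auto
  define g where "g = tp a r"
  have gp: "is_path C E g" "hd g = a" "last g = r" using tp_prop[OF aC r] g_def by auto
  have gc: "g = a # tl g" using tp_Cons[OF aC r] g_def by simp
  show ?thesis
  proof (cases "{a,b} \<in> path_edges g")
    case False
    have "is_path C E (b # g)"
    proof -
      have "path_edge_list (b # g) = {b,a} # path_edge_list g"
        using gc pel_Cons2[of b a "tl g"] by simp
      then show ?thesis using gp(1) False bC ab(1) unfolding is_path_def path_edges_def
        by (auto simp: insert_commute)
    qed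
    from tp_unique[OF this] have "tp b r = b # g" using gp gc by (metis last_ConsR list.discI list.sel(1))
    then show ?thesis unfolding g_def by simp
  next
    case True
    then obtain i where i: "Suc i < length g" "{a,b} = {g ! i, g ! Suc i}" unfolding pe_iff by auto
    have "g ! Suc i \<noteq> a" using tp_hd_only[OF aC r, of "Suc i"] i(1) g_def by simp
    then have gi: "g ! Suc i = b" "g ! i = a" using i(2) ab(2) by (auto simp: doubleton_eq_iff)
    have "i = 0"
    proof (rule ccontr)
      assume "i \<noteq> 0"
      then show False using tp_hd_only[OF aC r, of i] i(1) gi g_def by simp
    qed
    then have "tp b r = drop 1 g" using tp_drop[OF aC r, of 1] gi i(1) g_def by simp
    then have "g = a # tp b r" using gc by (simp add: drop_Suc)
    then show ?thesis unfolding g_def by simp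
  qed
qed

lemma no_cycle: assumes x: "x \<in> C" and r: "r \<in> C" and e: "e \<in> E" "e \<notin> path_edges (tp x r)"
  and u: "u \<in> set (tp x r)" "u \<in> e" and u': "u' \<in> set (tp x r)" "u' \<in> e"
  shows "u = u'"
proof (rule ccontr)
  assume ne: "u \<noteq> u'"
  define g where "g = tp x r"
  have ee: "e = {u,u'}" using edge2[OF e(1)] u(2) u'(2) ne
    by (metis card_2_iff doubleton_eq_iff insertE singletonD)
  obtain i where i: "i < length g" "g ! i = u" using u(1) g_def by (auto simp: in_set_conv_nth)
  obtain j where j: "j < length g" "g ! j = u'" using u'(1) g_def by (auto simp: in_set_conv_nth)
  have di: "tp u r = drop i g" using tp_drop[OF x r, of i] i g_def by simp
  have dj: "tp u' r = drop j g" using tp_drop[OF x r, of j] j g_def by simp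
  from tp_ext[of u u' r] ee e(1) ne r
  have "tp u' r = u' # tp u r \<or> tp u r = u # tp u' r" by simp
  then show False
  proof
    assume "tp u' r = u' # tp u r"
    then have "length (drop j g) = length (u' # drop i g)" using di dj by simp
    then have "i = Suc j" using i j by simp
    then have "{g ! j, g ! Suc j} \<in> path_edges g" using pe_nth[of j g] i by simp
    then show False using e(2) ee i j g_def \<open>i = Suc j\<close> by (simp add: insert_commute)
  next
    assume "tp u r = u # tp u' r"
    then have "length (drop i g) = length (u # drop j g)" using di dj by simp
    then have "j = Suc i" using i j by simp
    then have "{g ! i, g ! Suc i} \<in> path_edges g" using pe_nth[of i g] j by simp
    then show False using e(2) ee i j g_def \<open>j = Suc i\<close> by simp
  qed
qed

end

locale rooted = tree_ctx +
  fixes r :: 'a and q :: "'a set \<Rightarrow> 'a \<Rightarrow> int"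
  assumes rC: "r \<in> C"
    and r_odd: "\<And>e. e \<in> E \<Longrightarrow> r \<in> e \<Longrightarrow> odd (q e r)"
    and uniq: "\<And>v e e'. v \<in> C \<Longrightarrow> e \<in> E \<Longrightarrow> e' \<in> E \<Longrightarrow> v \<in> e \<Longrightarrow> v \<in> e' \<Longrightarrow> e \<noteq> e'
       \<Longrightarrow> even (q e v) \<Longrightarrow> odd (q e' v)"
begin

abbreviation gm where "gm v \<equiv> tp v r"
definition good where "good g u \<longleftrightarrow> (\<forall>\<epsilon>\<in>E. u \<in> \<epsilon> \<and> \<epsilon> \<notin> path_edges g \<longrightarrow> odd (q \<epsilon> u))"
definition OW where "OW v \<longleftrightarrow> (\<forall>u\<in>set (gm v). good (gm v) u)"
definition pass where "pass v \<longleftrightarrow> (\<forall>u\<in>set (tl (gm v)). good (gm v) u)"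
definition ch where "ch v = {c\<in>C. gm c = c # gm v}"

lemma OW_iff: assumes "v \<in> C" shows "OW v \<longleftrightarrow> pass v \<and> good (gm v) v"
proof -
  have "set (gm v) = insert v (set (tl (gm v)))" using tp_Cons[OF assms rC] by (metis list.simps(15))
  then show ?thesis unfolding OW_def pass_def by auto
qed

lemma ch_sub: "ch v \<subseteq> C" unfolding ch_def by auto

lemma ch_notin: assumes "v \<in> C" "c \<in> ch v" shows "c \<notin> set (gm v)" "c \<noteq> v"
proof -
  have c: "c \<in> C" "gm c = c # gm v" using assms unfolding ch_def by auto
  show "c \<notin> set (gm v)" using tp_notin_tl[OF c(1) rC] c(2) by simp
  then show "c \<noteq> v" using tp_Cons[OF assms(1) rC] by (metis list.set_intros(1))
qed

lemma ch_edge: assumes "v \<in> C" "c \<in> ch v" shows "{v,c} \<in> E"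
proof -
  have c: "c \<in> C" "gm c = c # gm v" using assms unfolding ch_def by auto
  have "path_edges (gm c) = insert {c,v} (path_edges (gm v))"
    using c(2) tp_Cons[OF assms(1) rC] pe_Cons2 by metis
  then show ?thesis using tp_pe[OF c(1) rC] by (auto simp: insert_commute)
qed

lemma first_edge: assumes "v \<in> C" "v \<noteq> r"
  shows "Suc 0 < length (gm v)" "{v, gm v ! 1} \<in> path_edges (gm v)" "{v, gm v ! 1} \<in> E"
    "v \<noteq> gm v ! 1" "gm v ! 1 \<in> C" "gm (gm v ! 1) = tl (gm v)"
proof -
  have p: "hd (gm v) = v" "last (gm v) = r" using tp_prop[OF assms(1) rC] by auto
  show l: "Suc 0 < length (gm v)"
  proof (rule ccontr)
    assume "\<not> Suc 0 < length (gm v)"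
    then have "length (gm v) = 1" using tp_ne[OF assms(1) rC] by (cases "gm v") auto
    then have "hd (gm v) = last (gm v)" by (cases "gm v") auto
    then show False using p assms by simp
  qed
  show "{v, gm v ! 1} \<in> path_edges (gm v)" using pe_nth[of 0 "gm v"] l p tp_ne[OF assms(1) rC]
    by (simp add: hd_conv_nth)
  then show "{v, gm v ! 1} \<in> E" using tp_pe[OF assms(1) rC] by auto
  show "v \<noteq> gm v ! 1" using tp_hd_only[OF assms(1) rC, of 1] l by auto
  show "gm v ! 1 \<in> C" using tp_set[OF assms(1) rC] l by auto
  show "gm (gm v ! 1) = tl (gm v)" using tp_drop[OF assms(1) rC, of 1] l by (simp add: drop_Suc)
qed

lemma pe_at_v: assumes "v \<in> C" "\<epsilon> \<in> path_edges (gm v)" "v \<in> \<epsilon>"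
  shows "v \<noteq> r \<and> \<epsilon> = {v, gm v ! 1}"
proof -
  obtain i where i: "Suc i < length (gm v)" "\<epsilon> = {gm v ! i, gm v ! Suc i}" using assms(2) unfolding pe_iff by auto
  have "gm v ! Suc i \<noteq> v" using tp_hd_only[OF assms(1) rC, of "Suc i"] i by simp
  then have "gm v ! i = v" using i assms(3) by auto
  then have "i = 0" using tp_hd_only[OF assms(1) rC, of i] i by (cases i) auto
  moreover have "v \<noteq> r" using i tp_self[OF rC] by (cases "v = r") auto
  ultimately show ?thesis using i \<open>gm v ! i = v\<close> by simp
qed

lemma Inc_eq: assumes v: "v \<in> C"
  shows "{\<epsilon>\<in>E. v \<in> \<epsilon> \<and> \<epsilon> \<notin> path_edges (gm v)} = (\<lambda>c. {v,c}) ` ch v"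
proof
  show "{\<epsilon>\<in>E. v \<in> \<epsilon> \<and> \<epsilon> \<notin> path_edges (gm v)} \<subseteq> (\<lambda>c. {v,c}) ` ch v"
  proof
    fix \<epsilon> assume "\<epsilon> \<in> {\<epsilon>\<in>E. v \<in> \<epsilon> \<and> \<epsilon> \<notin> path_edges (gm v)}"
    then have e: "\<epsilon> \<in> E" "v \<in> \<epsilon>" "\<epsilon> \<notin> path_edges (gm v)" by auto
    obtain c where c: "\<epsilon> = {v,c}" "v \<noteq> c" "c \<in> C" using edge_pair[OF e(1,2)] by blast
    from tp_ext[of v c r] e(1) c rC have "gm c = c # gm v \<or> gm v = v # gm c" by simp
    moreover have "gm v \<noteq> v # gm c"
    proof
      assume h: "gm v = v # gm c"
      have "{v, hd (gm c)} \<in> path_edges (gm v)" using h pe_Cons2[of v "hd (gm c)" "tl (gm c)"]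
        tp_Cons[OF c(3) rC] by (metis insertI1 list.sel(1))
      then show False using e(3) c tp_prop[OF c(3) rC] by simp
    qed
    ultimately have "c \<in> ch v" using c unfolding ch_def by auto
    then show "\<epsilon> \<in> (\<lambda>c. {v,c}) ` ch v" using c by auto
  qed
next
  show "(\<lambda>c. {v,c}) ` ch v \<subseteq> {\<epsilon>\<in>E. v \<in> \<epsilon> \<and> \<epsilon> \<notin> path_edges (gm v)}"
  proof
    fix \<epsilon> assume "\<epsilon> \<in> (\<lambda>c. {v,c}) ` ch v"
    then obtain c where c: "c \<in> ch v" "\<epsilon> = {v,c}" by auto
    have "\<epsilon> \<notin> path_edges (gm v)" using pe_sub_set[of \<epsilon> "gm v" c] ch_notin[OF v c(1)] c by auto
    then show "\<epsilon> \<in> {\<epsilon>\<in>E. v \<in> \<epsilon> \<and> \<epsilon> \<notin> path_edges (gm v)}" using ch_edge[OF v c(1)] c by auto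
  qed
qed

lemma inj_ch: "v \<in> C \<Longrightarrow> inj_on (\<lambda>c. {v,c}) (ch v)"
  unfolding inj_on_def using ch_notin by (metis doubleton_eq_iff)

lemma good_v: assumes "v \<in> C" shows "good (gm v) v \<longleftrightarrow> (\<forall>c\<in>ch v. odd (q {v,c} v))"
proof -
  have "good (gm v) v \<longleftrightarrow> (\<forall>\<epsilon>\<in>{\<epsilon>\<in>E. v \<in> \<epsilon> \<and> \<epsilon> \<notin> path_edges (gm v)}. odd (q \<epsilon> v))"
    unfolding good_def by auto
  also have "\<dots> \<longleftrightarrow> (\<forall>c\<in>ch v. odd (q {v,c} v))" unfolding Inc_eq[OF assms] by auto
  finally show ?thesis .
qed

lemma pass_r: "pass r" unfolding pass_def using tp_self[OF rC] by simp

lemma ch_gm: assumes "v \<in> C" "c \<in> ch v" shows "gm c = c # gm v" "c \<in> C"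
  using assms unfolding ch_def by auto

lemma pass_ch: assumes v: "v \<in> C" and c: "c \<in> ch v"
  shows "pass c \<longleftrightarrow> pass v \<and> (\<forall>c'\<in>ch v. c' \<noteq> c \<longrightarrow> odd (q {v,c'} v))"
proof -
  have gc: "gm c = c # gm v" and cC: "c \<in> C" using ch_gm[OF v c] by auto
  have gv: "gm v = v # tl (gm v)" using tp_Cons[OF v rC] .
  have pe: "path_edges (gm c) = insert {c,v} (path_edges (gm v))"
    using gc gv pe_Cons2 by metis
  have cn: "c \<notin> set (gm v)" "c \<noteq> v" using ch_notin[OF v c] by auto
  have A: "good (gm c) u \<longleftrightarrow> good (gm v) u" if "u \<in> set (tl (gm v))" for u
  proof -
    have "u \<noteq> v" using that tp_notin_tl[OF v rC] by auto
    moreover have "u \<noteq> c" using that cn gv by (metis list.set_intros(2))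
    ultimately show ?thesis unfolding good_def pe by auto
  qed
  have B: "good (gm c) v \<longleftrightarrow> (\<forall>c'\<in>ch v. c' \<noteq> c \<longrightarrow> odd (q {v,c'} v))"
  proof -
    have "good (gm c) v \<longleftrightarrow> (\<forall>\<epsilon>\<in>{\<epsilon>\<in>E. v \<in> \<epsilon> \<and> \<epsilon> \<notin> path_edges (gm v)}. \<epsilon> \<noteq> {c,v} \<longrightarrow> odd (q \<epsilon> v))"
      unfolding good_def pe by auto
    also have "\<dots> \<longleftrightarrow> (\<forall>c'\<in>ch v. {v,c'} \<noteq> {c,v} \<longrightarrow> odd (q {v,c'} v))" unfolding Inc_eq[OF v] by auto
    also have "\<dots> \<longleftrightarrow> (\<forall>c'\<in>ch v. c' \<noteq> c \<longrightarrow> odd (q {v,c'} v))"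
      using ch_notin[OF v] cn by (metis doubleton_eq_iff)
    finally show ?thesis .
  qed
  have "pass c \<longleftrightarrow> (\<forall>u\<in>set (gm v). good (gm c) u)" unfolding pass_def gc by simp
  also have "\<dots> \<longleftrightarrow> (\<forall>u\<in>set (tl (gm v)). good (gm c) u) \<and> good (gm c) v"
    by (subst gv) auto
  also have "\<dots> \<longleftrightarrow> pass v \<and> good (gm c) v" unfolding pass_def using A by auto
  finally show ?thesis using B by simp
qed

lemma deg: assumes v: "v \<in> C" shows "valency E v = card (ch v) + (if v = r then 0 else 1)"
proof -
  let ?I = "{\<epsilon>\<in>E. v \<in> \<epsilon> \<and> \<epsilon> \<notin> path_edges (gm v)}"
  have cI: "card ?I = card (ch v)" unfolding Inc_eq[OF v] using card_image[OF inj_ch[OF v]] .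
  have fI: "finite ?I" using finE by auto
  show ?thesis
  proof (cases "v = r")
    case True
    have "{e\<in>E. v \<in> e} = ?I"
    proof (intro set_eqI iffI)
      fix e assume "e \<in> {e\<in>E. v \<in> e}"
      then show "e \<in> ?I" using pe_at_v[OF v, of e] True by blast
    qed blast
    then show ?thesis unfolding valency_def using cI True by simp
  next
    case False
    note fe = first_edge[OF v False]
    have "{e\<in>E. v \<in> e} = insert {v, gm v ! 1} ?I"
    proof (intro set_eqI iffI)
      fix e assume "e \<in> {e\<in>E. v \<in> e}"
      then show "e \<in> insert {v, gm v ! 1} ?I" using pe_at_v[OF v, of e] by blast
    next
      fix e assume "e \<in> insert {v, gm v ! 1} ?I"
      then show "e \<in> {e\<in>E. v \<in> e}" using fe(3) by blast
    qed
    moreover have "{v, gm v ! 1} \<notin> ?I" using fe(2) by blast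
    ultimately show ?thesis unfolding valency_def using cI False fI by simp
  qed
qed

lemma partition: "(\<Sum>v\<in>C. card {c\<in>ch v. pass c}) = card {c\<in>C. c \<noteq> r \<and> pass c}"
proof -
  have U: "{c\<in>C. c \<noteq> r \<and> pass c} = (\<Union>v\<in>C. {c\<in>ch v. pass c})"
  proof
    show "{c\<in>C. c \<noteq> r \<and> pass c} \<subseteq> (\<Union>v\<in>C. {c\<in>ch v. pass c})"
    proof
      fix c assume c: "c \<in> {c\<in>C. c \<noteq> r \<and> pass c}"
      then have cC: "c \<in> C" "c \<noteq> r" "pass c" by auto
      let ?v = "gm c ! 1"
      have vC: "?v \<in> C" and gv: "gm ?v = tl (gm c)" using first_edge[OF cC(1,2)] by auto
      have "gm c = c # gm ?v" unfolding gv using tp_Cons[OF cC(1) rC] .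
      then have "c \<in> ch ?v" unfolding ch_def using cC(1) by blast
      then show "c \<in> (\<Union>v\<in>C. {c\<in>ch v. pass c})" using \<open>?v \<in> C\<close> cC by auto
    qed
  next
    show "(\<Union>v\<in>C. {c\<in>ch v. pass c}) \<subseteq> {c\<in>C. c \<noteq> r \<and> pass c}"
    proof
      fix c assume "c \<in> (\<Union>v\<in>C. {c\<in>ch v. pass c})"
      then obtain v where v: "v \<in> C" "c \<in> ch v" "pass c" by auto
      have g: "gm c = c # gm v" "c \<in> C" using ch_gm[OF v(1,2)] by auto
      have "c \<noteq> r"
      proof
        assume "c = r"
        then have "[r] = r # gm v" using g tp_self[OF rC] by simp
        then show False using tp_ne[OF v(1) rC] by simp
      qed
      then show "c \<in> {c\<in>C. c \<noteq> r \<and> pass c}" using v g by blast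
    qed
  qed
  have D: "{c\<in>ch v. pass c} \<inter> {c\<in>ch w. pass c} = {}" if "v \<in> C" "w \<in> C" "v \<noteq> w" for v w
  proof (rule ccontr)
    assume "{c\<in>ch v. pass c} \<inter> {c\<in>ch w. pass c} \<noteq> {}"
    then obtain c where c: "c \<in> ch v" "c \<in> ch w" by auto
    have "c # gm v = c # gm w" using ch_gm(1)[OF that(1) c(1)] ch_gm(1)[OF that(2) c(2)] by simp
    then have "hd (gm v) = hd (gm w)" by simp
    then show False using tp_prop[OF that(1) rC] tp_prop[OF that(2) rC] that by simp
  qed
  have F: "finite {c\<in>ch v. pass c}" for v
    by (rule finite_subset[OF _ finC]) (use ch_sub in blast)
  have "card (\<Union>v\<in>C. {c\<in>ch v. pass c}) = (\<Sum>v\<in>C. card {c\<in>ch v. pass c})"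
  proof (rule card_UN_disjoint[OF finC])
    show "\<forall>i\<in>C. finite {c\<in>ch i. pass c}" using F by blast
    show "\<forall>i\<in>C. \<forall>j\<in>C. i \<noteq> j \<longrightarrow> {c\<in>ch i. pass c} \<inter> {c\<in>ch j. pass c} = {}" using D by blast
  qed
  then show ?thesis unfolding U by (rule sym)
qed

lemma local_par: assumes v: "v \<in> C"
  shows "even (valency E v * (if OW v then 1 else 0) + (if v \<noteq> r \<and> pass v then 1 else 0)
     + card {c\<in>ch v. pass c})"
proof (cases "pass v")
  case False
  then have "v \<noteq> r" using pass_r by auto
  moreover have "\<not> OW v" using OW_iff[OF v] False by simp
  moreover have "{c\<in>ch v. pass c} = {}" using pass_ch[OF v] False by auto
  then have "card {c\<in>ch v. pass c} = 0" by (simp only: card.empty)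
  ultimately show ?thesis using False by simp
next
  case True
  show ?thesis
  proof (cases "\<forall>c\<in>ch v. odd (q {v,c} v)")
    case True2: True
    have "OW v" using OW_iff[OF v] good_v[OF v] True True2 by simp
    moreover have "{c\<in>ch v. pass c} = ch v" using pass_ch[OF v] True True2 by auto
    ultimately show ?thesis using deg[OF v] True by simp
  next
    case False
    then obtain c0 where c0: "c0 \<in> ch v" "even (q {v,c0} v)" by auto
    have e0: "{v,c0} \<in> E" using ch_edge[OF v c0(1)] .
    have "v \<noteq> r" using r_odd[OF e0] c0(2) by auto
    moreover have "\<not> OW v" using OW_iff[OF v] good_v[OF v] c0 by auto
    moreover have "{c\<in>ch v. pass c} = {c0}"
    proof -
      have "pass c0" unfolding pass_ch[OF v c0(1)] using True
      proof (intro conjI ballI impI)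
        fix c' assume c': "c' \<in> ch v" "c' \<noteq> c0"
        have "{v,c0} \<noteq> {v,c'}" using c' ch_notin[OF v] c0(1) by (metis doubleton_eq_iff)
        then show "odd (q {v,c'} v)" using uniq[OF v e0 ch_edge[OF v c'(1)]] c0(2) by auto
      qed auto
      moreover have "\<not> pass c" if "c \<in> ch v" "c \<noteq> c0" for c
        using pass_ch[OF v that(1)] c0 that(2) by auto
      ultimately show ?thesis using c0(1) by auto
    qed
    ultimately show ?thesis using True by simp
  qed
qed

lemma sum_OW: "even (\<Sum>v\<in>C. valency E v * (if OW v then 1 else 0))"
proof -
  let ?a = "\<lambda>v. valency E v * (if OW v then 1 else 0)"
  let ?b = "\<lambda>v. (if v \<noteq> r \<and> pass v then 1 else 0::nat)"
  let ?c = "\<lambda>v. card {c\<in>ch v. pass c}"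
  let ?K = "card {c\<in>C. c \<noteq> r \<and> pass c}"
  have ev: "even (\<Sum>v\<in>C. ?a v + ?b v + ?c v)"
    by (rule dvd_sum) (rule local_par)
  have s1: "(\<Sum>v\<in>C. ?a v + ?b v + ?c v) = (\<Sum>v\<in>C. ?a v) + (\<Sum>v\<in>C. ?b v) + (\<Sum>v\<in>C. ?c v)"
    by (simp add: sum.distrib)
  have s2: "(\<Sum>v\<in>C. ?b v) = ?K"
    using sum.inter_filter[OF finC, of "\<lambda>_. 1::nat" "\<lambda>v. v \<noteq> r \<and> pass v"] by simp
  have "(\<Sum>v\<in>C. ?a v + ?b v + ?c v) = (\<Sum>v\<in>C. ?a v) + 2 * ?K"
    unfolding s1 s2 partition by simp
  with ev have "even ((\<Sum>v\<in>C. ?a v) + 2 * ?K)" by simp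
  then show ?thesis by simp
qed

lemma OW_odd: assumes v: "v \<in> C" shows "OW v \<longleftrightarrow> odd (Wt C E q v r)"
proof -
  let ?g = "gm v"
  have fin: "finite (incident_edges E ?g)" unfolding incident_edges_def using finE by auto
  have qp: "q_path q \<epsilon> ?g = q \<epsilon> u" if "\<epsilon> \<in> E" "\<epsilon> \<notin> path_edges ?g" "u \<in> set ?g" "u \<in> \<epsilon>" for \<epsilon> u
  proof -
    have "(THE u. u \<in> set ?g \<and> u \<in> \<epsilon>) = u"
    proof (rule the_equality)
      show "u \<in> set ?g \<and> u \<in> \<epsilon>" using that(3,4) by simp
    next
      fix u' assume h: "u' \<in> set ?g \<and> u' \<in> \<epsilon>"
      show "u' = u" using no_cycle[OF v rC that(1,2) _ _ that(3,4)] h by simp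
    qed
    then show ?thesis unfolding q_path_def by simp
  qed
  have "odd (Wt C E q v r) \<longleftrightarrow> (\<forall>\<epsilon>\<in>incident_edges E ?g. odd (q_path q \<epsilon> ?g))"
    unfolding Wt_def by (simp add: even_prod_iff[OF fin])
  also have "\<dots> \<longleftrightarrow> (\<forall>\<epsilon>\<in>E. \<forall>u\<in>set ?g. u \<in> \<epsilon> \<and> \<epsilon> \<notin> path_edges ?g \<longrightarrow> odd (q \<epsilon> u))"
  proof
    assume h: "\<forall>\<epsilon>\<in>incident_edges E ?g. odd (q_path q \<epsilon> ?g)"
    show "\<forall>\<epsilon>\<in>E. \<forall>u\<in>set ?g. u \<in> \<epsilon> \<and> \<epsilon> \<notin> path_edges ?g \<longrightarrow> odd (q \<epsilon> u)"
    proof (intro ballI impI)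
      fix \<epsilon> u assume a: "\<epsilon> \<in> E" "u \<in> set ?g" "u \<in> \<epsilon> \<and> \<epsilon> \<notin> path_edges ?g"
      have "\<epsilon> \<in> incident_edges E ?g" unfolding incident_edges_def using a by auto
      then have "odd (q_path q \<epsilon> ?g)" by (rule bspec[OF h])
      moreover have "q_path q \<epsilon> ?g = q \<epsilon> u" using qp[of \<epsilon> u] a by simp
      ultimately show "odd (q \<epsilon> u)" by simp
    qed
  next
    assume h: "\<forall>\<epsilon>\<in>E. \<forall>u\<in>set ?g. u \<in> \<epsilon> \<and> \<epsilon> \<notin> path_edges ?g \<longrightarrow> odd (q \<epsilon> u)"
    show "\<forall>\<epsilon>\<in>incident_edges E ?g. odd (q_path q \<epsilon> ?g)"
    proof
      fix \<epsilon> assume "\<epsilon> \<in> incident_edges E ?g"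
      then obtain u where a: "\<epsilon> \<in> E" "\<epsilon> \<notin> path_edges ?g" "u \<in> set ?g" "u \<in> \<epsilon>"
        unfolding incident_edges_def by auto
      have "odd (q \<epsilon> u)" using h a by auto
      then show "odd (q_path q \<epsilon> ?g)" using qp[OF a] by simp
    qed
  qed
  also have "\<dots> \<longleftrightarrow> OW v" unfolding OW_def good_def by blast
  finally show ?thesis by simp
qed

lemma key: assumes "odd (valency E r)"
  shows "odd (\<Sum>v\<in>C-{r}. int (valency E v) * Wt C E q v r)"
proof -
  have e1: "even (\<Sum>v\<in>C. int (valency E v) * Wt C E q v r - int (valency E v * (if OW v then 1 else 0)))"
  proof (rule dvd_sum)
    fix v assume v: "v \<in> C"
    show "even (int (valency E v) * Wt C E q v r - int (valency E v * (if OW v then 1 else 0)))"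
    proof (cases "OW v")
      case True
      then have "odd (Wt C E q v r)" using OW_odd[OF v] by simp
      then have "even (Wt C E q v r - 1)" by simp
      then have "even (int (valency E v) * (Wt C E q v r - 1))" by simp
      then show ?thesis using True by (simp add: algebra_simps)
    next
      case False
      then show ?thesis using OW_odd[OF v] by simp
    qed
  qed
  have e2: "even (\<Sum>v\<in>C. int (valency E v * (if OW v then 1 else 0)))"
    using sum_OW by (simp only: of_nat_sum[symmetric] even_of_nat)
  have "even (\<Sum>v\<in>C. int (valency E v) * Wt C E q v r)"
    using e1 e2 by (simp add: sum_subtractf)
  moreover have "(\<Sum>v\<in>C. int (valency E v) * Wt C E q v r) =
      int (valency E r) * Wt C E q r r + (\<Sum>v\<in>C-{r}. int (valency E v) * Wt C E q v r)"
    using sum.remove[OF finC rC] by blast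
  moreover have "odd (Wt C E q r r)"
  proof -
    have "OW r" using OW_iff[OF rC] pass_r good_v[OF rC] ch_edge[OF rC] r_odd by auto
    then show ?thesis using OW_odd[OF rC] by simp
  qed
  ultimately show ?thesis using assms by simp
qed

end


locale dt =
  fixes V A :: "'a set" and E :: "'a set set" and f :: "'a \<Rightarrow> int" and q :: "'a set \<Rightarrow> 'a \<Rightarrow> int"
  assumes dec: "decorated_tree V A E f q"
begin

lemma treeC: "is_tree (V \<union> A) E" using dec unfolding decorated_tree_def by auto

sublocale tree_ctx "V \<union> A" E using treeC by unfold_locales

lemma VA: "V \<inter> A = {}" using dec unfolding decorated_tree_def by auto
lemma arrow_val: "\<alpha> \<in> A \<Longrightarrow> valency E \<alpha> = 1" using dec unfolding decorated_tree_def by auto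
lemma q_arrow: "e \<in> E \<Longrightarrow> \<alpha> \<in> A \<Longrightarrow> \<alpha> \<in> e \<Longrightarrow> q e \<alpha> = 1"
  using dec unfolding decorated_tree_def by auto
lemma gcd_cond: "v \<in> V \<Longrightarrow> e \<in> E \<Longrightarrow> e' \<in> E \<Longrightarrow> v \<in> e \<Longrightarrow> v \<in> e' \<Longrightarrow> e \<noteq> e' \<Longrightarrow> gcd (q e v) (q e' v) = 1"
  using dec unfolding decorated_tree_def by auto

lemma rooted_at: assumes "\<alpha> \<in> A" shows "rooted (V \<union> A) E \<alpha> q"
proof (unfold_locales)
  show "\<alpha> \<in> V \<union> A" using assms by simp
  show "odd (q e \<alpha>)" if "e \<in> E" "\<alpha> \<in> e" for e using q_arrow[OF that(1) assms that(2)] by simp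
  show "odd (q e' v)" if "v \<in> V \<union> A" "e \<in> E" "e' \<in> E" "v \<in> e" "v \<in> e'" "e \<noteq> e'" "even (q e v)" for v e e'
  proof (cases "v \<in> A")
    case True
    then show ?thesis using q_arrow[OF that(3) True that(5)] by simp
  next
    case False
    then have "v \<in> V" using that(1) by simp
    then have g: "gcd (q e v) (q e' v) = 1" using gcd_cond that by blast
    show ?thesis
    proof
      assume "even (q e' v)"
      then have "2 dvd gcd (q e v) (q e' v)" using that(7) by simp
      then show False using g by simp
    qed
  qed
qed

lemma keyA: assumes "\<alpha> \<in> A"
  shows "odd (\<Sum>v\<in>(V \<union> A)-{\<alpha>}. int (valency E v) * Wt (V \<union> A) E q v \<alpha>)"
proof -
  interpret rooted "V \<union> A" E \<alpha> q using rooted_at[OF assms] .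
  show ?thesis using key arrow_val[OF assms] by simp
qed

lemma incident_rev: "incident_edges E (rev xs) = incident_edges E xs"
  unfolding incident_edges_def path_edges_def by (simp add: pel_rev)

lemma q_path_rev: "q_path q e (rev xs) = q_path q e xs"
  unfolding q_path_def by simp

lemma W_sym: assumes "v \<in> V \<union> A" "w \<in> V \<union> A"
  shows "Wt (V \<union> A) E q v w = Wt (V \<union> A) E q w v"
  unfolding Wt_def tp_rev[OF assms] incident_rev q_path_rev ..

lemma xval_eq: "xval V A E f q v \<alpha> = f \<alpha> * Wt (V \<union> A) E q v \<alpha>"
  unfolding xval_def Wt_def Let_def ..

lemma arrow_edge_eq: assumes "\<alpha> \<in> A" "e \<in> E" "\<alpha> \<in> e" shows "arrow_edge E \<alpha> = e"
proof -
  have "card {e\<in>E. \<alpha> \<in> e} = 1" using arrow_val[OF assms(1)] unfolding valency_def .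
  then obtain e0 where e0: "{e\<in>E. \<alpha> \<in> e} = {e0}" by (meson card_1_singletonE)
  have ee: "e = e0" using e0 assms(2,3) by blast
  show ?thesis unfolding arrow_edge_def
  proof (rule the_equality)
    show "e \<in> E \<and> \<alpha> \<in> e" using assms by simp
    fix e' assume "e' \<in> E \<and> \<alpha> \<in> e'"
    then have "e' \<in> {e\<in>E. \<alpha> \<in> e}" by simp
    then show "e' = e" using e0 ee by simp
  qed
qed

lemma arrow_edge_in: assumes "\<alpha> \<in> A" "\<beta> \<in> A" "\<beta> \<noteq> \<alpha>"
  shows "arrow_edge E \<alpha> \<in> path_edges (tp \<alpha> \<beta>)"
proof -
  interpret rooted "V \<union> A" E \<beta> q using rooted_at[OF assms(2)] .
  have aC: "\<alpha> \<in> V \<union> A" using assms by simp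
  note fe = first_edge[OF aC assms(3)[symmetric]]
  have "arrow_edge E \<alpha> = {\<alpha>, tp \<alpha> \<beta> ! 1}" using arrow_edge_eq[OF assms(1) fe(3)] by simp
  then show ?thesis using fe(2) by simp
qed

lemma xhat_eq: assumes "\<alpha> \<in> A" "\<beta> \<in> A" "\<beta> \<noteq> \<alpha>"
  shows "xhat V A E f q \<alpha> \<beta> = xval V A E f q \<alpha> \<beta>"
proof -
  have "{\<epsilon> \<in> incident_edges E (tp \<alpha> \<beta>). \<alpha> \<notin> \<epsilon>} = incident_edges E (tp \<alpha> \<beta>)"
  proof (intro set_eqI iffI)
    fix \<epsilon> assume h: "\<epsilon> \<in> incident_edges E (tp \<alpha> \<beta>)"
    then have "\<epsilon> \<in> E" "\<epsilon> \<notin> path_edges (tp \<alpha> \<beta>)" unfolding incident_edges_def by auto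
    moreover have "\<alpha> \<in> \<epsilon> \<Longrightarrow> arrow_edge E \<alpha> = \<epsilon>" using arrow_edge_eq[OF assms(1)] calculation(1) by simp
    ultimately have "\<alpha> \<notin> \<epsilon>" using arrow_edge_in[OF assms] by auto
    then show "\<epsilon> \<in> {\<epsilon> \<in> incident_edges E (tp \<alpha> \<beta>). \<alpha> \<notin> \<epsilon>}" using h by simp
  qed simp
  then show ?thesis unfolding xhat_def xval_def Let_def by simp
qed

abbreviation NA where "NA \<equiv> A - A0 A f"

lemma pval_eq: assumes "\<alpha> \<in> A"
  shows "pval V A E f q \<alpha> (arrow_edge E \<alpha>) = (\<Sum>\<beta>\<in>NA-{\<alpha>}. f \<beta> * Wt (V \<union> A) E q \<alpha> \<beta>)"
proof -
  have S: "{\<beta> \<in> NA. arrow_edge E \<alpha> \<in> path_edges (tp \<alpha> \<beta>)} = NA - {\<alpha>}"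
  proof (intro set_eqI iffI)
    fix \<beta> assume h: "\<beta> \<in> {\<beta> \<in> NA. arrow_edge E \<alpha> \<in> path_edges (tp \<alpha> \<beta>)}"
    have "\<beta> \<noteq> \<alpha>"
    proof
      assume "\<beta> = \<alpha>"
      then have "tp \<alpha> \<beta> = [\<alpha>]" using tp_self assms by simp
      then show False using h unfolding path_edges_def by simp
    qed
    then show "\<beta> \<in> NA - {\<alpha>}" using h by simp
  next
    fix \<beta> assume h: "\<beta> \<in> NA - {\<alpha>}"
    then show "\<beta> \<in> {\<beta> \<in> NA. arrow_edge E \<alpha> \<in> path_edges (tp \<alpha> \<beta>)}"
      using arrow_edge_in[OF assms, of \<beta>] by simp
  qed
  show ?thesis unfolding pval_def S
  proof (rule sum.cong)
    fix \<beta> assume "\<beta> \<in> NA - {\<alpha>}"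
    then show "xhat V A E f q \<alpha> \<beta> = f \<beta> * Wt (V \<union> A) E q \<alpha> \<beta>"
      using xhat_eq[OF assms, of \<beta>] xval_eq by simp
  qed simp
qed

lemma main: "even (Mval V A E f q + Fval V A E f q)"
proof -
  let ?C = "V \<union> A"
  let ?C' = "V \<union> A0 A f"
  let ?W = "Wt ?C E q"
  let ?d = "\<lambda>v. int (valency E v)"
  define Ws where "Ws \<alpha> = (\<Sum>v\<in>?C'. ?d v * ?W v \<alpha>)" for \<alpha>
  define R where "R \<alpha> = (\<Sum>\<beta>\<in>NA-{\<alpha>}. ?W \<alpha> \<beta>)" for \<alpha>
  define P where "P \<alpha> = (\<Sum>\<beta>\<in>NA-{\<alpha>}. f \<beta> * ?W \<alpha> \<beta>)" for \<alpha>
  define X where "X = (\<Sum>v\<in>?C'. Nval V A E f q v)"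
  define h0 where "h0 \<alpha> \<beta> = (f \<alpha> + (if even (f \<alpha>) then f \<beta> else 0)) * ?W \<alpha> \<beta>" for \<alpha> \<beta>
  define h where "h \<alpha> \<beta> = (f \<alpha> + f \<beta> + f \<alpha> * f \<beta>) * ?W \<alpha> \<beta>" for \<alpha> \<beta>
  have finA: "finite A" and finV: "finite V" using dec unfolding decorated_tree_def by auto
  have fN: "finite NA" using finA by simp
  have fC': "finite ?C'" using finA finV unfolding A0_def by simp
  have NA_sub: "NA \<subseteq> A" by auto
  have M1: "Mval V A E f q = 2 * X - (\<Sum>\<alpha>\<in>NA. f \<alpha> * Ws \<alpha>)"
  proof -
    have a: "Mval V A E f q = 2 * X - (\<Sum>v\<in>?C'. Nval V A E f q v * ?d v)"
      unfolding Mval_def X_def by (simp add: algebra_simps sum_subtractf sum_distrib_left)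
    have "(\<Sum>v\<in>?C'. Nval V A E f q v * ?d v) = (\<Sum>v\<in>?C'. \<Sum>\<alpha>\<in>NA. f \<alpha> * (?d v * ?W v \<alpha>))"
      unfolding Nval_def xval_eq
    proof (rule sum.cong[OF refl])
      fix v
      show "(\<Sum>\<alpha>\<in>NA. f \<alpha> * ?W v \<alpha>) * ?d v = (\<Sum>\<alpha>\<in>NA. f \<alpha> * (?d v * ?W v \<alpha>))"
        by (subst sum_distrib_right) (simp add: mult.commute mult.left_commute)
    qed
    also have "\<dots> = (\<Sum>\<alpha>\<in>NA. \<Sum>v\<in>?C'. f \<alpha> * (?d v * ?W v \<alpha>))" by (rule sum.swap)
    also have "\<dots> = (\<Sum>\<alpha>\<in>NA. f \<alpha> * Ws \<alpha>)" unfolding Ws_def by (simp add: sum_distrib_left)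
    finally show ?thesis using a by simp
  qed
  have F1: "Fval V A E f q = (\<Sum>\<alpha>\<in>NA. gcd (f \<alpha>) (P \<alpha>))"
    unfolding Fval_def Farrow_def P_def
    by (rule sum.cong) (auto simp: pval_eq)
  have K: "odd (Ws \<alpha> + R \<alpha>)" if a: "\<alpha> \<in> NA" for \<alpha>
  proof -
    have aA: "\<alpha> \<in> A" using a by simp
    have U: "?C - {\<alpha>} = ?C' \<union> (NA - {\<alpha>})" using a VA unfolding A0_def by auto
    have D: "?C' \<inter> (NA - {\<alpha>}) = {}" using VA unfolding A0_def by auto
    have "(\<Sum>v\<in>?C-{\<alpha>}. ?d v * ?W v \<alpha>) = Ws \<alpha> + (\<Sum>v\<in>NA-{\<alpha>}. ?d v * ?W v \<alpha>)"
      unfolding U Ws_def using sum.union_disjoint[OF fC' _ D] fN by simp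
    also have "(\<Sum>v\<in>NA-{\<alpha>}. ?d v * ?W v \<alpha>) = R \<alpha>"
      unfolding R_def
    proof (rule sum.cong)
      fix v assume v: "v \<in> NA - {\<alpha>}"
      then have "?d v = 1" using arrow_val by simp
      moreover have "?W v \<alpha> = ?W \<alpha> v" using W_sym v aA by simp
      ultimately show "?d v * ?W v \<alpha> = ?W \<alpha> v" by simp
    qed simp
    finally show ?thesis using keyA[OF aA] by simp
  qed
  have T: "even ((gcd (f \<alpha>) (P \<alpha>) - f \<alpha> * Ws \<alpha>) - (\<Sum>\<beta>\<in>NA-{\<alpha>}. h0 \<alpha> \<beta>))" if a: "\<alpha> \<in> NA" for \<alpha>
  proof -
    have hs: "(\<Sum>\<beta>\<in>NA-{\<alpha>}. h0 \<alpha> \<beta>) = f \<alpha> * R \<alpha> + (if even (f \<alpha>) then P \<alpha> else 0)"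
      unfolding h0_def R_def P_def by (simp add: sum.distrib sum_distrib_left algebra_simps)
    show ?thesis
    proof (cases "even (f \<alpha>)")
      case True
      have g: "even (gcd (f \<alpha>) (P \<alpha>) - P \<alpha>)"
      proof (cases "even (P \<alpha>)")
        case True2: True
        then have "2 dvd gcd (f \<alpha>) (P \<alpha>)" using True by simp
        then show ?thesis using True2 by simp
      next
        case False
        then have "odd (gcd (f \<alpha>) (P \<alpha>))" using dvd_trans[OF _ gcd_dvd2] by blast
        then show ?thesis using False by simp
      qed
      have "(gcd (f \<alpha>) (P \<alpha>) - f \<alpha> * Ws \<alpha>) - (\<Sum>\<beta>\<in>NA-{\<alpha>}. h0 \<alpha> \<beta>)
          = (gcd (f \<alpha>) (P \<alpha>) - P \<alpha>) - f \<alpha> * (Ws \<alpha> + R \<alpha>)"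
        unfolding hs using True by (simp add: algebra_simps)
      moreover have "even (f \<alpha> * (Ws \<alpha> + R \<alpha>))" using True by simp
      ultimately show ?thesis using dvd_diff[OF g] by metis
    next
      case False
      have g: "odd (gcd (f \<alpha>) (P \<alpha>))" using False dvd_trans[OF _ gcd_dvd1] by blast
      have "odd (f \<alpha> * (Ws \<alpha> + R \<alpha>))" using False K[OF a] by simp
      have eqF: "(gcd (f \<alpha>) (P \<alpha>) - f \<alpha> * Ws \<alpha>) - (\<Sum>\<beta>\<in>NA-{\<alpha>}. h0 \<alpha> \<beta>)
          = gcd (f \<alpha>) (P \<alpha>) - f \<alpha> * (Ws \<alpha> + R \<alpha>)"
        unfolding hs using False by (simp add: algebra_simps)
      have evF: "even (gcd (f \<alpha>) (P \<alpha>) - f \<alpha> * (Ws \<alpha> + R \<alpha>))"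
        using g \<open>odd (f \<alpha> * (Ws \<alpha> + R \<alpha>))\<close> by simp
      show ?thesis unfolding eqF by (rule evF)
    qed
  qed
  have H: "even (h0 \<alpha> \<beta> - h \<alpha> \<beta>)" for \<alpha> \<beta>
  proof (cases "even (f \<alpha>)")
    case True
    have "h0 \<alpha> \<beta> - h \<alpha> \<beta> = - (f \<alpha> * (f \<beta> * ?W \<alpha> \<beta>))"
      unfolding h0_def h_def using True by (simp add: algebra_simps)
    then show ?thesis using True by simp
  next
    case False
    have "h0 \<alpha> \<beta> - h \<alpha> \<beta> = - ((1 + f \<alpha>) * (f \<beta> * ?W \<alpha> \<beta>))"
      unfolding h0_def h_def using False by (simp add: algebra_simps)
    then show ?thesis using False by simp
  qed
  have S: "even (\<Sum>\<alpha>\<in>NA. \<Sum>\<beta>\<in>NA-{\<alpha>}. h \<alpha> \<beta>)"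
  proof (rule offdiag_even[OF fN])
    show "\<forall>a\<in>NA. \<forall>b\<in>NA. h a b = h b a"
    proof (intro ballI)
      fix a b assume "a \<in> NA" "b \<in> NA"
      then have "?W a b = ?W b a" using W_sym by simp
      then show "h a b = h b a" unfolding h_def by (simp add: algebra_simps)
    qed
  qed
  have e1: "even (\<Sum>\<alpha>\<in>NA. (gcd (f \<alpha>) (P \<alpha>) - f \<alpha> * Ws \<alpha>) - (\<Sum>\<beta>\<in>NA-{\<alpha>}. h0 \<alpha> \<beta>))"
    by (rule dvd_sum) (rule T)
  have e2: "even (\<Sum>\<alpha>\<in>NA. \<Sum>\<beta>\<in>NA-{\<alpha>}. h0 \<alpha> \<beta> - h \<alpha> \<beta>)"
    by (intro dvd_sum H)
  have "Mval V A E f q + Fval V A E f q = 2 * X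
     + (\<Sum>\<alpha>\<in>NA. (gcd (f \<alpha>) (P \<alpha>) - f \<alpha> * Ws \<alpha>) - (\<Sum>\<beta>\<in>NA-{\<alpha>}. h0 \<alpha> \<beta>))
     + (\<Sum>\<alpha>\<in>NA. \<Sum>\<beta>\<in>NA-{\<alpha>}. h0 \<alpha> \<beta> - h \<alpha> \<beta>)
     + (\<Sum>\<alpha>\<in>NA. \<Sum>\<beta>\<in>NA-{\<alpha>}. h \<alpha> \<beta>)"
    unfolding M1 F1 by (simp add: sum_subtractf sum.distrib algebra_simps)
  then show ?thesis using e1 e2 S by simp
qed

end


theorem theorem3p1:
  fixes V A :: "'a set" and E :: "'a set set" and f :: "'a \<Rightarrow> int"
    and q :: "'a set \<Rightarrow> 'a \<Rightarrow> int"
  assumes "decorated_tree V A E f q"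
  shows "even (Mval V A E f q + Fval V A E f q)"
proof -
  interpret dt V A E f q using assms by unfold_locales
  show ?thesis by (rule main)
qed

end
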